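(* The Hopf algebras $\mathsf{cf}(\mathrm{UT}_\bullet)$ and $\mathsf{scf}(\mathrm{UT}_\bullet)$ are noncommutative and noncocommutative.
   Context: Fix the finite field $\mathbb{F}_q$; $[n]=\{1,\dots,n\}$. $\mathrm{UT}_n$ is the group of $n\times n$ unipotent upper triangular matrices over $\mathbb{F}_q$; $\mathsf{cf}$ denotes complex class functions. Hopf algebra $\mathsf{cf}(\mathrm{UT}_\bullet)=\bigoplus_n\mathsf{cf}(\mathrm{UT}_n)$: for $I\subseteq[n]$, $I^c=[n]\setminus I$, let $\mathrm{UL}_I=\{g\in\mathrm{UT}_n:(g-1_n)_{i,j}\ne0\text{ only if }(i,j)\in I\times I\cup I^c\times I^c\}$, $\mathrm{UR}_I=\{g:(g-1_n)_{i,j}\ne0\text{ only if }(i,j)\in I\times I^c\}$, $\mathrm{UP}_I=\{g:(g-1_n)_{i,j}=0\text{ for }(i,j)\in I^c\times I\}=\mathrm{UL}_I\ltimes\mathrm{UR}_I$ ($\mathrm{UP}_{[i]}=\mathrm{UT}_n$). With $\mathrm{cano}_I:I\to[|I|]$ order-preserving, $\mathrm{UL}_I\cong\mathrm{UT}_{|I|}\times\mathrm{UT}_{|I^c|}$ by relabelling the diagonal blocks, inducing $\mathrm{st}_{(I,I^c)}:\mathsf{cf}(\mathrm{UL}_I)\to\mathsf{cf}(\mathrm{UT}_{|I|})\otimes\mathsf{cf}(\mathrm{UT}_{|I^c|})$. Product $\mu=\bigoplus_{n\ge i\ge0}\mathrm{Inf}^{\mathrm{UT}_n}_{\mathrm{UL}_{[i]}}\circ\mathrm{st}^{-1}_{([i],[i]^c)}$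 with $\mathrm{Inf}\psi(lr)=\psi(l)$; coproduct $\Delta=\bigoplus_n\sum_{I\subseteq[n]}\mathrm{st}_{(I,I^c)}\circ\mathrm{Def}^{\mathrm{UP}_I}_{\mathrm{UL}_I}\circ\mathrm{Res}^{\mathrm{UT}_n}_{\mathrm{UP}_I}$ with $\mathrm{Def}\psi(g)=\frac1{|\mathrm{UR}_I|}\sum_{x\in\mathrm{UR}_I}\psi(gx)$. A natural unit interval order of $[n]$ is a partial order $\pi\subseteq[n]\times[n]$ with $(i,j)\in\pi\Rightarrow i\le j$ such that for every $(j,k)\in\pi$ with $j\ne k$, all $(i,l)$ with $i\le j$, $k\le l$ lie in $\pi$. For such $\pi$, $\mathrm{UT}(\pi)=\{g\in\mathrm{UT}_n:(g-1_n)_{i,j}\ne0\text{ only if }(i,j)\in\pi\}$, and $\mathsf{scf}(\mathrm{UT}_n)$ is the span of the characters $\mathrm{Ind}^{\mathrm{UT}_n}_{\mathrm{UT}(\pi)}(\mathbb{1})$ over all natural unit interval orders $\pi$ of $[n]$; $\mathsf{scf}(\mathrm{UT}_\bullet)=\bigoplus_n\mathsf{scf}(\mathrm{UT}_n)$ is a sub-Hopf algebra of $\mathsf{cf}(\mathrm{UT}_\bullet)$. *)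

theory Defs
  imports Complex_Main "HOL-Algebra.Group"
begin

text \<open>Matrices over the finite field are functions nat => nat => 'a; an element of UT_n
  has indices in {1..n}: ones on the diagonal of {1..n}, entries only strictly above the
  diagonal inside {1..n}, and zero everywhere else.\<close>

type_synonym 'a mat = "nat \<Rightarrow> nat \<Rightarrow> 'a"

definition UT :: "nat \<Rightarrow> ('a::field) mat set" where
  "UT n = {g. \<forall>i j.
      (i = j \<longrightarrow> g i j = (if 1 \<le> i \<and> i \<le> n then 1 else 0)) \<and>
      (i \<noteq> j \<and> \<not> (1 \<le> i \<and> i < j \<and> j \<le> n) \<longrightarrow> g i j = 0)}"

definition mat_mult :: "nat \<Rightarrow> ('a::field) mat \<Rightarrow> 'a mat \<Rightarrow> 'a mat" where
  "mat_mult n g h = (\<lambda>i j. \<Sum>k\<in>{1..n}. g i k * h k j)"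

definition mat_one :: "nat \<Rightarrow> ('a::field) mat" where
  "mat_one n = (\<lambda>i j. if i = j \<and> 1 \<le> i \<and> i \<le> n then 1 else 0)"

definition UT_grp :: "nat \<Rightarrow> ('a::field) mat monoid" where
  "UT_grp n = \<lparr>carrier = UT n, mult = mat_mult n, one = mat_one n\<rparr>"

definition cf :: "nat \<Rightarrow> (('a::{finite,field}) mat \<Rightarrow> complex) set" where
  "cf n = {f. (\<forall>g. g \<notin> UT n \<longrightarrow> f g = 0) \<and>
     (\<forall>g\<in>UT n. \<forall>x\<in>UT n.
        f (mat_mult n (mat_mult n x g) (m_inv (UT_grp n) x)) = f g)}"

text \<open>Elements of cf(UT_bullet) = direct sum over n of cf(UT_n): finitely supported families.\<close>
definition cfUT :: "(nat \<Rightarrow> ('a::{finite,field}) mat \<Rightarrow> complex) set" where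
  "cfUT = {x. (\<forall>n. x n \<in> cf n) \<and> finite {n. x n \<noteq> (\<lambda>_. 0)}}"

text \<open>Diagonal blocks for I = [i]: the upper-left i x i block and the lower-right block,
  relabelled to UT_i and UT_(n-i).\<close>
definition topblk :: "nat \<Rightarrow> ('a::field) mat \<Rightarrow> 'a mat" where
  "topblk i g = (\<lambda>a b. if 1 \<le> a \<and> a \<le> i \<and> 1 \<le> b \<and> b \<le> i then g a b else 0)"

definition botblk :: "nat \<Rightarrow> nat \<Rightarrow> ('a::field) mat \<Rightarrow> 'a mat" where
  "botblk i n g = (\<lambda>a b. if 1 \<le> a \<and> a \<le> n - i \<and> 1 \<le> b \<and> b \<le> n - i
                          then g (a + i) (b + i) else 0)"

text \<open>The product mu, with the tensor x_i (x) y_j identified with the function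
  (g,h) |-> x_i g * y_j h on UT_i x UT_j: Inf of st^{-1} evaluated at g in UT_n is the value
  at the block diagonal part of g.\<close>
definition cf_mult ::
  "(nat \<Rightarrow> ('a::{finite,field}) mat \<Rightarrow> complex) \<Rightarrow> (nat \<Rightarrow> 'a mat \<Rightarrow> complex)
     \<Rightarrow> nat \<Rightarrow> 'a mat \<Rightarrow> complex" where
  "cf_mult x y n g = (if g \<in> UT n then
      (\<Sum>i\<in>{0..n}. x i (topblk i g) * y (n - i) (botblk i n g)) else 0)"

text \<open>cano_I : I -> [|I|] order preserving (1-based).\<close>
definition cano :: "nat set \<Rightarrow> nat \<Rightarrow> nat" where
  "cano I i = card {k\<in>I. k \<le> i}"

text \<open>st^{-1}_{(I,I^c)}: the element of UL_I with diagonal blocks g (on I) and h (on I^c).\<close>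
definition embed :: "nat set \<Rightarrow> nat \<Rightarrow> ('a::field) mat \<Rightarrow> 'a mat \<Rightarrow> 'a mat" where
  "embed I n g h = (\<lambda>i j. let J = {1..n} - I in
      if i \<in> I \<and> j \<in> I then g (cano I i) (cano I j)
      else if i \<in> J \<and> j \<in> J then h (cano J i) (cano J j) else 0)"

definition UR :: "nat \<Rightarrow> nat set \<Rightarrow> ('a::field) mat set" where
  "UR n I = {r \<in> UT n. \<forall>i j. i \<noteq> j \<and> r i j \<noteq> 0 \<longrightarrow> i \<in> I \<and> j \<in> {1..n} - I}"

text \<open>The coproduct Delta; the component in cf(UT_a) (x) cf(UT_b) is identified with a function
  on UT_a x UT_b. It is the sum over I subset [a+b] with |I| = a of
  st o Def o Res applied to the degree a+b component.\<close>
definition cf_comult ::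
  "(nat \<Rightarrow> ('a::{finite,field}) mat \<Rightarrow> complex) \<Rightarrow> nat \<Rightarrow> nat \<Rightarrow> 'a mat \<times> 'a mat \<Rightarrow> complex" where
  "cf_comult x a b p = (case p of (g, h) \<Rightarrow>
     if g \<in> UT a \<and> h \<in> UT b then
       (\<Sum>I\<in>{I. I \<subseteq> {1..a+b} \<and> card I = a}.
          (1 / of_nat (card (UR (a+b) I :: 'a mat set))) *
          (\<Sum>r\<in>UR (a+b) I. x (a+b) (mat_mult (a+b) (embed I (a+b) g h) r)))
     else 0)"

definition nuio :: "nat \<Rightarrow> (nat \<times> nat) set \<Rightarrow> bool" where
  "nuio n \<pi> \<longleftrightarrow> partial_order_on {1..n} \<pi> \<and>
     (\<forall>(i,j)\<in>\<pi>. i \<le> j) \<and>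
     (\<forall>(j,k)\<in>\<pi>. j \<noteq> k \<longrightarrow> (\<forall>i l. 1 \<le> i \<and> i \<le> j \<and> k \<le> l \<and> l \<le> n \<longrightarrow> (i,l) \<in> \<pi>))"

definition UTpi :: "nat \<Rightarrow> (nat \<times> nat) set \<Rightarrow> ('a::field) mat set" where
  "UTpi n \<pi> = {g \<in> UT n. \<forall>i j. i \<noteq> j \<and> g i j \<noteq> 0 \<longrightarrow> (i,j) \<in> \<pi>}"

definition indchar :: "nat \<Rightarrow> (nat \<times> nat) set \<Rightarrow> ('a::{finite,field}) mat \<Rightarrow> complex" where
  "indchar n \<pi> g = (if g \<in> UT n then
      (1 / of_nat (card (UTpi n \<pi> :: 'a mat set))) *
      of_nat (card {x \<in> UT n. mat_mult n (mat_mult n (m_inv (UT_grp n) x) g) x \<in> UTpi n \<pi>})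
    else 0)"

definition scf :: "nat \<Rightarrow> (('a::{finite,field}) mat \<Rightarrow> complex) set" where
  "scf n = {f. \<exists>S c. finite S \<and> S \<subseteq> {indchar n \<pi> | \<pi>. nuio n \<pi>} \<and>
              f = (\<lambda>g. \<Sum>\<chi>\<in>S. c \<chi> * \<chi> g)}"

definition scfUT :: "(nat \<Rightarrow> ('a::{finite,field}) mat \<Rightarrow> complex) set" where
  "scfUT = {x \<in> cfUT. \<forall>n. x n \<in> scf n}"

definition noncommutative_on :: "(nat \<Rightarrow> ('a::{finite,field}) mat \<Rightarrow> complex) set \<Rightarrow> bool" where
  "noncommutative_on A \<longleftrightarrow> (\<exists>x\<in>A. \<exists>y\<in>A. cf_mult x y \<noteq> cf_mult y x)"

definition noncocommutative_on :: "(nat \<Rightarrow> ('a::{finite,field}) mat \<Rightarrow> complex) set \<Rightarrow> bool" where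
  "noncocommutative_on A \<longleftrightarrow>
     (\<exists>x\<in>A. cf_comult x \<noteq> (\<lambda>a b p. cf_comult x b a (snd p, fst p)))"

end

theory Submission imports Defs begin

lemma UT_D:
  assumes "g \<in> UT n"
  shows "\<And>i. g i i = (if 1 \<le> i \<and> i \<le> n then 1 else 0)"
    and "\<And>i j. i \<noteq> j \<Longrightarrow> \<not> (1 \<le> i \<and> i < j \<and> j \<le> n) \<Longrightarrow> g i j = 0"
  using assms unfolding UT_def by blast+

lemma UT_iff: "g \<in> UT n \<longleftrightarrow> (\<forall>i j. g i j \<noteq> 0 \<longrightarrow> 1 \<le> i \<and> i \<le> j \<and> j \<le> n) \<and> (\<forall>i. 1 \<le> i \<and> i \<le> n \<longrightarrow> g i i = 1)"
proof
  assume g: "g \<in> UT n"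
  note D = UT_D[OF g]
  have "1 \<le> i \<and> i \<le> j \<and> j \<le> n" if "g i j \<noteq> 0" for i j
  proof (cases "i = j")
    case True then show ?thesis using D(1)[of i] that by (simp split: if_splits)
  next
    case False then show ?thesis using D(2)[of i j] that by linarith
  qed
  moreover have "\<forall>i. 1 \<le> i \<and> i \<le> n \<longrightarrow> g i i = 1" using D(1) by simp
  ultimately show "(\<forall>i j. g i j \<noteq> 0 \<longrightarrow> 1 \<le> i \<and> i \<le> j \<and> j \<le> n) \<and> (\<forall>i. 1 \<le> i \<and> i \<le> n \<longrightarrow> g i i = 1)" by blast
next
  assume H: "(\<forall>i j. g i j \<noteq> 0 \<longrightarrow> 1 \<le> i \<and> i \<le> j \<and> j \<le> n) \<and> (\<forall>i. 1 \<le> i \<and> i \<le> n \<longrightarrow> g i i = 1)"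
  show "g \<in> UT n" unfolding UT_def
  proof (intro CollectI allI conjI impI)
    fix i j
    show "i = j \<Longrightarrow> g i j = (if 1 \<le> i \<and> i \<le> n then 1 else 0)" using H by force
    show "i \<noteq> j \<and> \<not> (1 \<le> i \<and> i < j \<and> j \<le> n) \<Longrightarrow> g i j = 0" using H
      by (metis le_neq_implies_less)
  qed
qed

lemma UT_nz: "g \<in> UT n \<Longrightarrow> g i j \<noteq> 0 \<Longrightarrow> 1 \<le> i \<and> i \<le> j \<and> j \<le> n"
  by (simp add: UT_iff)
lemma UT_diag: "g \<in> UT n \<Longrightarrow> 1 \<le> i \<Longrightarrow> i \<le> n \<Longrightarrow> g i i = 1"
  by (simp add: UT_iff)

lemma finite_UT: "finite (UT n :: ('a::{finite,field}) mat set)"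
proof -
  let ?B = "{1..n} \<times> {1..n}"
  let ?f = "\<lambda>g::'a mat. restrict (case_prod g) ?B"
  have "inj_on ?f (UT n)"
  proof (rule inj_onI)
    fix g h :: "'a mat" assume g: "g \<in> UT n" and h: "h \<in> UT n" and e: "?f g = ?f h"
    show "g = h"
    proof (rule ext, rule ext)
      fix i j
      show "g i j = h i j"
      proof (cases "(i,j) \<in> ?B")
        case True then show ?thesis using fun_cong[OF e, of "(i,j)"] by simp
      next
        case False
        have "g i j = 0" using UT_nz[OF g, of i j] False by (cases "g i j = 0") auto
        moreover have "h i j = 0" using UT_nz[OF h, of i j] False by (cases "h i j = 0") auto
        ultimately show ?thesis by simp
      qed
    qed
  qed
  moreover have "?f ` UT n \<subseteq> PiE ?B (\<lambda>_. UNIV)" by (auto simp: image_subset_iff)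
  moreover have "finite (PiE ?B (\<lambda>_. UNIV::'a set))" by (rule finite_PiE) auto
  ultimately show ?thesis by (meson finite_imageD finite_subset)
qed

lemma mat_one_UT: "mat_one n \<in> UT n"
  by (simp add: UT_iff mat_one_def)

lemma mat_mult_UT: assumes g: "g \<in> UT n" and h: "h \<in> UT n" shows "mat_mult n g h \<in> UT n"
  unfolding UT_iff
proof safe
  fix i j assume "mat_mult n g h i j \<noteq> 0"
  then obtain k where k: "k \<in> {1..n}" "g i k * h k j \<noteq> 0" unfolding mat_mult_def
    by (meson sum.not_neutral_contains_not_neutral)
  then show "1 \<le> i" "i \<le> j" "j \<le> n" using UT_nz[OF g, of i k] UT_nz[OF h, of k j] by auto
next
  fix i assume i: "1 \<le> i" "i \<le> n"
  have "mat_mult n g h i i = (\<Sum>k\<in>{1..n}. if k = i then 1 else 0)"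
    unfolding mat_mult_def
  proof (rule sum.cong)
    fix k assume "k \<in> {1..n}"
    show "g i k * h k i = (if k = i then 1 else 0)"
    proof (cases "k = i")
      case True then show ?thesis using UT_diag[OF g] UT_diag[OF h] i by simp
    next
      case False
      then have "g i k = 0 \<or> h k i = 0" using UT_nz[OF g, of i k] UT_nz[OF h, of k i] by fastforce
      then show ?thesis using False by auto
    qed
  qed simp
  also have "\<dots> = 1" using i by simp
  finally show "mat_mult n g h i i = 1" .
qed

lemma mat_mult_assoc: "mat_mult n (mat_mult n a b) c = mat_mult n a (mat_mult n b c)"
  unfolding mat_mult_def
  apply (rule ext, rule ext)
  apply (simp add: sum_distrib_left sum_distrib_right mult.assoc)
  apply (rule sum.swap)
  done

lemma mat_one_left: "g \<in> UT n \<Longrightarrow> mat_mult n (mat_one n) g = g"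
proof (rule ext, rule ext)
  fix i j assume g: "g \<in> UT n"
  have "mat_mult n (mat_one n) g i j = (\<Sum>k\<in>{1..n}. if k = i then g i j else 0)"
    unfolding mat_mult_def mat_one_def by (rule sum.cong) auto
  also have "\<dots> = g i j" using UT_nz[OF g, of i j] by (cases "g i j = 0") auto
  finally show "mat_mult n (mat_one n) g i j = g i j" .
qed

lemma mat_one_right: "g \<in> UT n \<Longrightarrow> mat_mult n g (mat_one n) = g"
proof (rule ext, rule ext)
  fix i j assume g: "g \<in> UT n"
  have "mat_mult n g (mat_one n) i j = (\<Sum>k\<in>{1..n}. if k = j then g i j else 0)"
    unfolding mat_mult_def mat_one_def by (rule sum.cong) auto
  also have "\<dots> = g i j" using UT_nz[OF g, of i j] by (cases "g i j = 0") auto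
  finally show "mat_mult n g (mat_one n) i j = g i j" .
qed

lemma mat_mult_left_inj:
  assumes x: "x \<in> UT n" and g: "g \<in> UT n" and h: "h \<in> UT n"
    and e: "mat_mult n x g = mat_mult n x h"
  shows "g = h"
proof -
  have key: "\<forall>i. n - i = d \<longrightarrow> 1 \<le> i \<longrightarrow> i \<le> n \<longrightarrow> (\<forall>j. g i j = h i j)" for d
  proof (induction d rule: less_induct)
    case (less d)
    show ?case
    proof (intro allI impI)
      fix i j assume d: "n - i = d" and i: "1 \<le> i" "i \<le> n"
      have IH: "g k j = h k j" if "k \<in> {1..n}" "k \<noteq> i" "x i k \<noteq> 0" for k
      proof -
        from UT_nz[OF x that(3)] have "i \<le> k" by simp
        with that have "i < k" by simp
        then have "n - k < d" using d that(1) by auto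
        then show ?thesis using less.IH that(1) by auto
      qed
      have ee: "(\<Sum>k\<in>{1..n}. x i k * g k j) = (\<Sum>k\<in>{1..n}. x i k * h k j)"
        using fun_cong[OF fun_cong[OF e], of i j] by (simp add: mat_mult_def)
      have s: "(\<Sum>k\<in>{1..n}. x i k * f k j) = x i i * f i j + (\<Sum>k\<in>{1..n}-{i}. x i k * f k j)" for f :: "'a mat"
        using i by (simp add: sum.remove)
      have "(\<Sum>k\<in>{1..n}-{i}. x i k * g k j) = (\<Sum>k\<in>{1..n}-{i}. x i k * h k j)"
      proof (rule sum.cong)
        fix k assume "k \<in> {1..n} - {i}"
        then show "x i k * g k j = x i k * h k j" using IH[of k] by (cases "x i k = 0") auto
      qed simp
      then show "g i j = h i j" using ee s[of g] s[of h] UT_diag[OF x i] by simp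
    qed
  qed
  show ?thesis
  proof (rule ext, rule ext)
    fix i j
    show "g i j = h i j"
    proof (cases "1 \<le> i \<and> i \<le> n")
      case True then show ?thesis using key by blast
    next
      case False
      have "g i j = 0" using UT_nz[OF g, of i j] False by (cases "g i j = 0") auto
      moreover have "h i j = 0" using UT_nz[OF h, of i j] False by (cases "h i j = 0") auto
      ultimately show ?thesis by simp
    qed
  qed
qed

lemma UT_grp_simps [simp]:
  "carrier (UT_grp n) = UT n" "mult (UT_grp n) = mat_mult n" "one (UT_grp n) = mat_one n"
  by (simp_all add: UT_grp_def)

lemma monoid_UT: "monoid (UT_grp n :: ('a::field) mat monoid)"
  by unfold_locales (auto simp: mat_mult_UT mat_one_UT mat_mult_assoc mat_one_left mat_one_right)

lemma right_inv_ex: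
  assumes x: "x \<in> (UT n :: ('a::{finite,field}) mat set)"
  shows "\<exists>y\<in>UT n. mat_mult n x y = mat_one n"
proof -
  have "mat_mult n x ` UT n = UT n"
    by (rule endo_inj_surj) (auto simp: finite_UT mat_mult_UT x inj_on_def intro: mat_mult_left_inj[OF x])
  then show ?thesis using mat_one_UT by (metis imageE)
qed

lemma group_UT: "group (UT_grp n :: ('a::{finite,field}) mat monoid)"
proof (rule monoid.group_l_invI[OF monoid_UT])
  fix x :: "'a mat" assume "x \<in> carrier (UT_grp n)"
  then have x: "x \<in> UT n" by simp
  obtain y where y: "y \<in> UT n" "mat_mult n x y = mat_one n" using right_inv_ex[OF x] by blast
  obtain z where z: "z \<in> UT n" "mat_mult n y z = mat_one n" using right_inv_ex[OF y(1)] by blast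
  have "x = mat_mult n x (mat_mult n y z)" using z mat_one_right[OF x] by simp
  also have "\<dots> = z" by (simp only: mat_mult_assoc[symmetric] y(2) mat_one_left[OF z(1)])
  finally have "mat_mult n y x = mat_one n" using z by simp
  then show "\<exists>y\<in>carrier (UT_grp n). y \<otimes>\<^bsub>UT_grp n\<^esub> x = \<one>\<^bsub>UT_grp n\<^esub>" using y by auto
qed

definition closedpat :: "nat \<Rightarrow> (nat \<times> nat) set \<Rightarrow> bool" where
  "closedpat n \<pi> \<longleftrightarrow> (\<forall>i k j. 1 \<le> i \<and> i < k \<and> k < j \<and> j \<le> n \<and> (i,j) \<notin> \<pi> \<longrightarrow> (i,k) \<notin> \<pi> \<and> (k,j) \<notin> \<pi>)"

lemma UTpi_iff: "g \<in> UTpi n \<pi> \<longleftrightarrow> g \<in> UT n \<and> (\<forall>i j. i \<noteq> j \<and> g i j \<noteq> 0 \<longrightarrow> (i,j) \<in> \<pi>)"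
  by (simp add: UTpi_def)

lemma pat_L1:
  assumes A: "A \<in> UT n" and B: "B \<in> UTpi n \<pi>" and cp: "closedpat n \<pi>"
    and ij: "1 \<le> i" "i < j" "j \<le> n" "(i,j) \<notin> \<pi>"
  shows "mat_mult n A B i j = A i j"
proof -
  have BU: "B \<in> UT n" using B by (simp add: UTpi_iff)
  have "mat_mult n A B i j = (\<Sum>k\<in>{1..n}. if k = j then A i j else 0)"
    unfolding mat_mult_def
  proof (rule sum.cong)
    fix k assume k: "k \<in> {1..n}"
    show "A i k * B k j = (if k = j then A i j else 0)"
    proof (cases "k = j")
      case True then show ?thesis using UT_diag[OF BU, of j] ij by simp
    next
      case False
      have "A i k = 0 \<or> B k j = 0"
      proof (rule ccontr)
        assume "\<not> (A i k = 0 \<or> B k j = 0)"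
        then have a: "A i k \<noteq> 0" and b: "B k j \<noteq> 0" by auto
        from UT_nz[OF A a] UT_nz[OF BU b] False have ikj: "i \<le> k" "k < j" by auto
        from B b False have kj: "(k,j) \<in> \<pi>" by (simp add: UTpi_iff)
        show False
        proof (cases "k = i")
          case True then show False using kj ij by simp
        next
          case False then have "i < k" using ikj by simp
          then show False using cp kj ij ikj unfolding closedpat_def by blast
        qed
      qed
      then show ?thesis using False by auto
    qed
  qed simp
  also have "\<dots> = A i j" using ij by simp
  finally show ?thesis .
qed

lemma pat_L2:
  assumes A: "A \<in> UT n" and B: "B \<in> UTpi n \<pi>" and C: "C \<in> UT n" and cp: "closedpat n \<pi>"
    and ij: "1 \<le> i" "i < j" "j \<le> n" "(i,j) \<notin> \<pi>"
  shows "mat_mult n (mat_mult n A B) C i j = mat_mult n A C i j"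
proof -
  have BU: "B \<in> UT n" using B by (simp add: UTpi_iff)
  have AB: "mat_mult n A B \<in> UT n" using A BU by (rule mat_mult_UT)
  show ?thesis unfolding mat_mult_def[of n "mat_mult n A B" C] mat_mult_def[of n A C]
  proof (rule sum.cong)
    fix k assume k: "k \<in> {1..n}"
    show "mat_mult n A B i k * C k j = A i k * C k j"
    proof (cases "C k j = 0")
      case False
      then have kj: "k \<le> j" using UT_nz[OF C] by blast
      consider "k < i" | "k = i" | "i < k \<and> k < j" | "k = j" using kj by linarith
      then show ?thesis
      proof cases
        case 1
        then have "mat_mult n A B i k = 0" "A i k = 0" using UT_nz[OF AB, of i k] UT_nz[OF A, of i k] by auto
        then show ?thesis by simp
      next
        case 2 then show ?thesis using UT_diag[OF AB, of i] UT_diag[OF A, of i] ij by simp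
      next
        case 3
        then have "(i,k) \<notin> \<pi>" using cp ij unfolding closedpat_def by blast
        then show ?thesis using pat_L1[OF A B cp, of i k] 3 ij by simp
      next
        case 4 then show ?thesis using pat_L1[OF A B cp, of i j] ij by simp
      qed
    qed simp
  qed simp
qed

lemma pat_conj:
  assumes A: "A \<in> UT n" and B: "B \<in> UTpi n \<pi>" and C: "C \<in> UT n" and cp: "closedpat n \<pi>"
    and AC: "mat_mult n A C = mat_one n"
  shows "mat_mult n (mat_mult n A B) C \<in> UTpi n \<pi>"
proof -
  have BU: "B \<in> UT n" using B by (simp add: UTpi_iff)
  have M: "mat_mult n (mat_mult n A B) C \<in> UT n" by (intro mat_mult_UT A BU C)
  show ?thesis unfolding UTpi_iff
  proof (intro conjI M allI impI)
    fix i j assume h: "i \<noteq> j \<and> mat_mult n (mat_mult n A B) C i j \<noteq> 0"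
    then have ij: "1 \<le> i" "i < j" "j \<le> n" using UT_nz[OF M, of i j] by auto
    show "(i,j) \<in> \<pi>"
    proof (rule ccontr)
      assume "(i,j) \<notin> \<pi>"
      then have "mat_mult n (mat_mult n A B) C i j = mat_one n i j"
        using pat_L2[OF A B C cp ij] AC by simp
      then show False using h by (simp add: mat_one_def)
    qed
  qed
qed

lemma finite_UTpi: "finite (UTpi n \<pi> :: ('a::{finite,field}) mat set)"
  by (rule finite_subset[OF _ finite_UT]) (auto simp: UTpi_iff)

lemma mat_one_UTpi: "mat_one n \<in> UTpi n \<pi>"
  by (simp add: UTpi_iff mat_one_UT) (simp add: mat_one_def)

lemma conj_iff:
  fixes x g :: "('a::{finite,field}) mat"
  assumes x: "x \<in> UT n" and g: "g \<in> UT n" and cp: "closedpat n \<pi>"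
  shows "mat_mult n (mat_mult n x g) (m_inv (UT_grp n) x) \<in> UTpi n \<pi> \<longleftrightarrow> g \<in> UTpi n \<pi>"
    and "mat_mult n (mat_mult n (m_inv (UT_grp n) x) g) x \<in> UTpi n \<pi> \<longleftrightarrow> g \<in> UTpi n \<pi>"
proof -
  interpret G: group "UT_grp n :: 'a mat monoid" by (rule group_UT)
  let ?i = "m_inv (UT_grp n) x"
  have xi: "?i \<in> UT n" using G.inv_closed[of x] x by simp
  have r: "mat_mult n x ?i = mat_one n" using G.r_inv[of x] x by simp
  have l: "mat_mult n ?i x = mat_one n" using G.l_inv[of x] x by simp
  have e1: "mat_mult n (mat_mult n ?i (mat_mult n (mat_mult n x g) ?i)) x = g"
    by (simp add: mat_mult_assoc l mat_one_right[OF g]) (simp add: mat_mult_assoc[symmetric] l mat_one_left[OF g])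
  have e2: "mat_mult n (mat_mult n x (mat_mult n (mat_mult n ?i g) x)) ?i = g"
    by (simp add: mat_mult_assoc r mat_one_right[OF g]) (simp add: mat_mult_assoc[symmetric] r mat_one_left[OF g])
  have U1: "mat_mult n (mat_mult n x g) ?i \<in> UT n" by (intro mat_mult_UT x g xi)
  have U2: "mat_mult n (mat_mult n ?i g) x \<in> UT n" by (intro mat_mult_UT x g xi)
  show "mat_mult n (mat_mult n x g) ?i \<in> UTpi n \<pi> \<longleftrightarrow> g \<in> UTpi n \<pi>"
    using pat_conj[OF x _ xi cp r, of g] pat_conj[OF xi _ x cp l, of "mat_mult n (mat_mult n x g) ?i"] e1 by auto
  show "mat_mult n (mat_mult n ?i g) x \<in> UTpi n \<pi> \<longleftrightarrow> g \<in> UTpi n \<pi>"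
    using pat_conj[OF xi _ x cp l, of g] pat_conj[OF x _ xi cp r, of "mat_mult n (mat_mult n ?i g) x"] e2 by auto
qed

lemma indchar_eq:
  fixes g :: "('a::{finite,field}) mat"
  assumes cp: "closedpat n \<pi>"
  shows "indchar n \<pi> g = (if g \<in> UTpi n \<pi> then of_nat (card (UT n :: 'a mat set)) / of_nat (card (UTpi n \<pi> :: 'a mat set)) else 0)"
proof (cases "g \<in> UT n")
  case False then show ?thesis by (auto simp: indchar_def UTpi_iff)
next
  case True
  have "{x \<in> UT n. mat_mult n (mat_mult n (m_inv (UT_grp n) x) g) x \<in> UTpi n \<pi>} = (if g \<in> UTpi n \<pi> then UT n else {})"
    using conj_iff(2)[OF _ True cp] by auto
  then show ?thesis using True by (simp add: indchar_def)
qed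

lemma indchar_cf:
  assumes cp: "closedpat n \<pi>"
  shows "(indchar n \<pi> :: ('a::{finite,field}) mat \<Rightarrow> complex) \<in> cf n"
  unfolding cf_def
proof (intro CollectI conjI allI impI ballI)
  fix g :: "'a mat" assume "g \<notin> UT n" then show "indchar n \<pi> g = 0" by (simp add: indchar_def)
next
  fix g x :: "'a mat" assume g: "g \<in> UT n" and x: "x \<in> UT n"
  show "indchar n \<pi> (mat_mult n (mat_mult n x g) (m_inv (UT_grp n) x)) = indchar n \<pi> g"
    using conj_iff(1)[OF x g cp] by (simp add: indchar_eq[OF cp])
qed

lemma nuio_closedpat: "nuio n \<pi> \<Longrightarrow> closedpat n \<pi>"
  unfolding nuio_def closedpat_def by fastforce

definition emat :: "nat \<Rightarrow> nat \<Rightarrow> nat \<Rightarrow> ('a::field) mat" where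
  "emat n a b = (\<lambda>i j. if i = j \<and> 1 \<le> i \<and> i \<le> n then 1 else if i = a \<and> j = b then 1 else 0)"

lemma emat_UT: "1 \<le> a \<Longrightarrow> a < b \<Longrightarrow> b \<le> n \<Longrightarrow> emat n a b \<in> UT n"
  by (auto simp: UT_iff emat_def split: if_splits)

lemma atLeastAtMost_1_4: "{1..4::nat} = {1,2,3,4}" "{Suc 0..4} = {1,2,3,4}" by auto
lemma atLeastAtMost_1_3: "{1..3::nat} = {1,2,3}" "{Suc 0..3} = {1,2,3}" by auto
lemma atLeastAtMost_1_2: "{1..2::nat} = {1,2}" "{Suc 0..2} = {1,2}" by auto
lemma atLeastAtMost_0_3: "{0..3::nat} = {0,1,2,3}" by auto

lemma cano_empty [simp]: "cano {} i = 0" by (simp add: cano_def)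
lemma cano_insert [simp]: "finite A \<Longrightarrow> cano (insert a A) i = (if a \<le> i \<and> a \<notin> A then Suc (cano A i) else cano A i)"
proof -
  assume A: "finite A"
  have "{k \<in> insert a A. k \<le> i} = (if a \<le> i then insert a {k\<in>A. k \<le> i} else {k\<in>A. k \<le> i})" by auto
  then show ?thesis using A by (auto simp: cano_def insert_absorb card_insert_if)
qed


lemma embed_out: "I \<subseteq> {1..n} \<Longrightarrow> \<not> (i \<in> {1..n} \<and> j \<in> {1..n}) \<Longrightarrow> embed I n g h i j = 0"
  by (auto simp: embed_def Let_def)

lemma emat_out: "a \<in> {1..n} \<Longrightarrow> b \<in> {1..n} \<Longrightarrow> \<not> (i \<in> {1..n} \<and> j \<in> {1..n}) \<Longrightarrow> emat n a b i j = 0"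
  by (auto simp: emat_def)

lemma mat_eqI:
  assumes "\<And>i j. i \<in> {1..n} \<Longrightarrow> j \<in> {1..n} \<Longrightarrow> A i j = B i j"
    and "\<And>i j. \<not> (i \<in> {1..n} \<and> j \<in> {1..n}) \<Longrightarrow> A i j = 0"
    and "\<And>i j. \<not> (i \<in> {1..n} \<and> j \<in> {1..n}) \<Longrightarrow> B i j = 0"
  shows "A = B"
proof (rule ext, rule ext)
  fix i j show "A i j = B i j" using assms by (cases "i \<in> {1..n} \<and> j \<in> {1..n}") auto
qed

lemmas esimps = atLeastAtMost_1_4 embed_def Let_def mat_one_def emat_def insert_Diff_if

lemma embed_LHS:
  "embed {1} 4 (mat_one 1) (emat 3 2 3) = (emat 4 3 4 :: ('a::field) mat)"
  "embed {2} 4 (mat_one 1) (emat 3 2 3) = (emat 4 3 4 :: ('a::field) mat)"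
  "embed {3} 4 (mat_one 1) (emat 3 2 3) = (emat 4 2 4 :: ('a::field) mat)"
  "embed {4} 4 (mat_one 1) (emat 3 2 3) = (emat 4 2 3 :: ('a::field) mat)"
  by (rule mat_eqI[where n=4]; (rule embed_out emat_out; simp)?; auto simp: esimps)+

lemma embed_RHS:
  "embed {2,3,4} 4 (emat 3 2 3) (mat_one 1) = (emat 4 3 4 :: ('a::field) mat)"
  "embed {1,3,4} 4 (emat 3 2 3) (mat_one 1) = (emat 4 3 4 :: ('a::field) mat)"
  "embed {1,2,4} 4 (emat 3 2 3) (mat_one 1) = (emat 4 2 4 :: ('a::field) mat)"
  "embed {1,2,3} 4 (emat 3 2 3) (mat_one 1) = (emat 4 2 3 :: ('a::field) mat)"
  by (rule mat_eqI[where n=4]; (rule embed_out emat_out; simp)?; auto simp: esimps)+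

lemma emat_mult:
  assumes ab: "a \<noteq> b" and b: "b \<in> {1..n}"
  shows "mat_mult n (emat n a b) r i j = (if i \<in> {1..n} then r i j else 0) + (if i = a then r b j else 0)"
proof -
  have "mat_mult n (emat n a b) r i j = (\<Sum>k\<in>{1..n}. (if k = i then (if i \<in> {1..n} then r i j else 0) else 0) + (if k = b then (if i = a then r b j else 0) else 0))"
    unfolding mat_mult_def by (rule sum.cong) (use ab in \<open>auto simp: emat_def\<close>)
  also have "\<dots> = (if i \<in> {1..n} then r i j else 0) + (if i = a then r b j else 0)"
    using b by (simp add: sum.distrib)
  finally show ?thesis .
qed

lemma UR_UT: "r \<in> UR n I \<Longrightarrow> r \<in> UT n" by (simp add: UR_def)
lemma UR_nz: "r \<in> UR n I \<Longrightarrow> i \<noteq> j \<Longrightarrow> r i j \<noteq> 0 \<Longrightarrow> i \<in> I \<and> j \<in> {1..n} \<and> j \<notin> I \<and> i < j"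
  using UT_nz[of r n i j] by (auto simp: UR_def)
lemma finite_UR: "finite (UR n I :: ('a::{finite,field}) mat set)"
  by (rule finite_subset[OF _ finite_UT]) (auto simp: UR_def)
lemma mat_one_UR: "mat_one n \<in> UR n I"
  by (auto simp: UR_def mat_one_UT) (simp_all add: mat_one_def split: if_splits)
lemma card_UR_pos: "card (UR n I :: ('a::{finite,field}) mat set) \<noteq> 0"
  using finite_UR mat_one_UR by (metis card_0_eq empty_iff)

lemma UR_is_one:
  assumes r: "r \<in> UR n I" and z: "\<And>i j. i \<in> I \<Longrightarrow> j \<in> {1..n} \<Longrightarrow> j \<notin> I \<Longrightarrow> i < j \<Longrightarrow> r i j = 0"
  shows "r = mat_one n"
proof (rule ext, rule ext)
  fix i j
  show "r i j = mat_one n i j"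
  proof (cases "i = j")
    case True then show ?thesis using UT_D(1)[OF UR_UT[OF r], of i] by (simp add: mat_one_def)
  next
    case False then show ?thesis using UR_nz[OF r False] z[of i j] by (cases "r i j = 0") (auto simp: mat_one_def)
  qed
qed

definition pi4 :: "(nat \<times> nat) set" where "pi4 = Id_on {1..4} \<union> {(1,4),(2,4)}"

lemma nuio_pi4: "nuio 4 pi4"
  unfolding nuio_def partial_order_on_def preorder_on_def refl_on_def trans_def antisym_def pi4_def
  by auto

definition pid :: "nat \<Rightarrow> (nat \<times> nat) set" where "pid n = Id_on {1..n}"

lemma nuio_Id: "nuio n (pid n)"
  unfolding pid_def nuio_def partial_order_on_def preorder_on_def refl_on_def trans_def antisym_def
  by auto

definition cst :: "nat \<Rightarrow> (nat \<times> nat) set \<Rightarrow> ('a::{finite,field}) itself \<Rightarrow> complex" where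
  "cst n \<pi> _ = of_nat (card (UT n :: 'a mat set)) / of_nat (card (UTpi n \<pi> :: 'a mat set))"

lemma cst_nz: "cst n \<pi> TYPE('a::{finite,field}) \<noteq> 0"
proof -
  have "card (UT n :: 'a mat set) \<noteq> 0" using finite_UT mat_one_UT by (metis card_0_eq empty_iff)
  moreover have "card (UTpi n \<pi> :: 'a mat set) \<noteq> 0" using finite_UTpi mat_one_UTpi by (metis card_0_eq empty_iff)
  ultimately show ?thesis by (simp add: cst_def)
qed

lemma indchar_cst:
  fixes g :: "('a::{finite,field}) mat"
  assumes "nuio n \<pi>"
  shows "indchar n \<pi> g = (if g \<in> UTpi n \<pi> then cst n \<pi> TYPE('a) else 0)"
  using indchar_eq[OF nuio_closedpat[OF assms], of g] by (simp add: cst_def)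

definition single :: "nat \<Rightarrow> (nat \<times> nat) set \<Rightarrow> nat \<Rightarrow> ('a::{finite,field}) mat \<Rightarrow> complex" where
  "single m \<pi> = (\<lambda>n. if n = m then indchar m \<pi> else (\<lambda>_. 0))"

lemma single_scfUT: "nuio m \<pi> \<Longrightarrow> (single m \<pi> :: nat \<Rightarrow> ('a::{finite,field}) mat \<Rightarrow> complex) \<in> scfUT"
proof -
  assume nu: "nuio m \<pi>"
  define x where "x = (single m \<pi> :: nat \<Rightarrow> 'a mat \<Rightarrow> complex)"
  have cf: "x n \<in> cf n" for n
    using indchar_cf[OF nuio_closedpat[OF nu]] by (auto simp: x_def single_def cf_def)
  have fin: "finite {n. x n \<noteq> (\<lambda>_. 0)}"
    by (rule finite_subset[of _ "{m}"]) (auto simp: x_def single_def)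
  have scf: "x n \<in> scf n" for n
  proof (cases "n = m")
    case True
    show ?thesis unfolding scf_def
      by (rule CollectI, rule exI[of _ "{indchar m \<pi>}"], rule exI[of _ "\<lambda>_. 1"]) (use True nu in \<open>auto simp: x_def single_def\<close>)
  next
    case False
    show ?thesis unfolding scf_def
      by (rule CollectI, rule exI[of _ "{}"], rule exI[of _ "\<lambda>_. 1"]) (use False in \<open>auto simp: x_def single_def\<close>)
  qed
  show ?thesis using cf fin scf by (simp add: scfUT_def cfUT_def x_def)
qed

lemma noncomm_witness:
  "cf_mult (single 1 (pid 1) :: nat \<Rightarrow> ('a::{finite,field}) mat \<Rightarrow> complex) (single 2 (pid 2))
   \<noteq> cf_mult (single 2 (pid 2)) (single 1 (pid 1))"
proof
  define g0 where "g0 = (emat 3 1 2 :: 'a mat)"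
  have g0: "g0 \<in> UT 3" unfolding g0_def by (rule emat_UT) auto
  have t1: "topblk 1 g0 = mat_one 1" by (auto simp: g0_def topblk_def emat_def mat_one_def fun_eq_iff)
  have b1: "botblk 1 3 g0 = mat_one 2" by (auto simp: g0_def botblk_def emat_def mat_one_def fun_eq_iff)
  have t2: "topblk 2 g0 \<notin> UTpi 2 (pid 2)"
  proof
    assume "topblk 2 g0 \<in> UTpi 2 (pid 2)"
    moreover have "topblk 2 g0 1 2 \<noteq> 0" by (simp add: g0_def topblk_def emat_def)
    ultimately have "(1::nat, 2::nat) \<in> pid 2" by (auto simp: UTpi_iff)
    then show False by (auto simp: pid_def)
  qed
  have n1: "nuio 1 (pid 1)" and n2: "nuio 2 (pid 2)" by (rule nuio_Id)+
  assume eq: "cf_mult (single 1 (pid 1) :: nat \<Rightarrow> 'a mat \<Rightarrow> complex) (single 2 (pid 2))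
   = cf_mult (single 2 (pid 2)) (single 1 (pid 1))"
  have i1: "indchar 1 (pid 1) (topblk 1 g0) = cst 1 (pid 1) TYPE('a)"
    by (subst indchar_cst[OF n1]) (use t1 in \<open>simp add: mat_one_UTpi\<close>)
  have i2: "indchar 2 (pid 2) (botblk 1 3 g0) = cst 2 (pid 2) TYPE('a)"
    by (subst indchar_cst[OF n2]) (use b1 in \<open>simp add: mat_one_UTpi\<close>)
  have i3: "indchar 2 (pid 2) (topblk 2 g0) = 0"
    by (subst indchar_cst[OF n2]) (use t2 in simp)
  have L: "cf_mult (single 1 (pid 1) :: nat \<Rightarrow> 'a mat \<Rightarrow> complex) (single 2 (pid 2)) 3 g0
      = cst 1 (pid 1) TYPE('a) * cst 2 (pid 2) TYPE('a)"
    using g0 i1 i2 by (simp add: cf_mult_def atLeastAtMost_0_3 single_def)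
  have R: "cf_mult (single 2 (pid 2)) (single 1 (pid 1) :: nat \<Rightarrow> 'a mat \<Rightarrow> complex) 3 g0 = 0"
    using g0 i3 by (simp add: cf_mult_def atLeastAtMost_0_3 single_def)
  show False using L R eq cst_nz by (metis mult_eq_0_iff)
qed

lemma pi4_facts: "(3,4) \<notin> pi4" "(2,3) \<notin> pi4" "(1,3) \<notin> pi4" "(2,4) \<in> pi4"
  by (auto simp: pi4_def)

definition SR :: "nat set \<Rightarrow> ('a::{finite,field}) mat \<Rightarrow> complex" where
  "SR I e = (\<Sum>r\<in>UR 4 I. indchar 4 pi4 (mat_mult 4 e r))"

lemma SR_zero:
  assumes ab: "a < b" "1 \<le> a" "b \<le> 4" "(a,b) \<notin> pi4" and I: "a \<in> I \<longrightarrow> b \<in> I"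
  shows "SR I (emat 4 a b :: ('a::{finite,field}) mat) = 0"
  unfolding SR_def
proof (rule sum.neutral, rule ballI)
  fix r :: "'a mat" assume r: "r \<in> UR 4 I"
  have rab: "r a b = 0" using UR_nz[OF r, of a b] ab I by (cases "r a b = 0") auto
  have rbb: "r b b = 1" using UT_diag[OF UR_UT[OF r], of b] ab by simp
  have "mat_mult 4 (emat 4 a b) r a b = 1" using ab rab rbb by (subst emat_mult) auto
  then have "mat_mult 4 (emat 4 a b) r \<notin> UTpi 4 pi4" using ab unfolding UTpi_iff
    by (metis less_irrefl one_neq_zero)
  then show "indchar 4 pi4 (mat_mult 4 (emat 4 a b) r) = 0" by (simp add: indchar_cst[OF nuio_pi4])
qed

lemma SR_one:
  assumes "{r \<in> UR 4 I. mat_mult 4 e r \<in> UTpi 4 pi4} = {mat_one 4}"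
  shows "SR I (e :: ('a::{finite,field}) mat) = cst 4 pi4 TYPE('a)"
proof -
  have "SR I e = (\<Sum>r\<in>UR 4 I. if mat_mult 4 e r \<in> UTpi 4 pi4 then cst 4 pi4 TYPE('a) else 0)"
    unfolding SR_def by (rule sum.cong) (simp_all add: indchar_cst[OF nuio_pi4])
  also have "\<dots> = (\<Sum>r\<in>{r \<in> UR 4 I. mat_mult 4 e r \<in> UTpi 4 pi4}. cst 4 pi4 TYPE('a))"
    by (rule sum.inter_filter[OF finite_UR, symmetric])
  also have "\<dots> = cst 4 pi4 TYPE('a)" using assms by simp
  finally show ?thesis .
qed

lemma eU: "(emat 4 2 4 :: ('a::field) mat) \<in> UT 4" by (rule emat_UT) auto

lemma emat24_UTpi: "(emat 4 2 4 :: ('a::field) mat) \<in> UTpi 4 pi4"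
  unfolding UTpi_iff using eU[where 'a='a] by (auto simp: emat_def pi4_def split: if_splits)

lemma one_3: "{r \<in> UR 4 {3}. mat_mult 4 (emat 4 2 4) r \<in> UTpi 4 pi4} = {mat_one 4 :: ('a::{finite,field}) mat}"
proof (rule equalityI; rule subsetI)
  fix r :: "'a mat" assume "r \<in> {r \<in> UR 4 {3}. mat_mult 4 (emat 4 2 4) r \<in> UTpi 4 pi4}"
  then have r: "r \<in> UR 4 {3}" and P: "mat_mult 4 (emat 4 2 4) r \<in> UTpi 4 pi4" by auto
  have "mat_mult 4 (emat 4 2 4) r 3 4 = r 3 4" by (subst emat_mult) auto
  moreover have "\<not> (3 \<noteq> (4::nat) \<and> mat_mult 4 (emat 4 2 4) r 3 4 \<noteq> 0)"
    using P pi4_facts(1) unfolding UTpi_iff by blast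
  ultimately have r34: "r 3 4 = 0" by simp
  have "r = mat_one 4"
    by (rule UR_is_one[OF r]) (use r34 in \<open>auto simp: atLeastAtMost_1_4\<close>)
  then show "r \<in> {mat_one 4}" by simp
next
  fix r :: "'a mat" assume "r \<in> {mat_one 4}"
  then show "r \<in> {r \<in> UR 4 {3}. mat_mult 4 (emat 4 2 4) r \<in> UTpi 4 pi4}"
    using mat_one_UR emat24_UTpi[where 'a='a] mat_one_right[OF eU[where 'a='a]] by auto
qed

lemma one_124: "{r \<in> UR 4 {1,2,4}. mat_mult 4 (emat 4 2 4) r \<in> UTpi 4 pi4} = {mat_one 4 :: ('a::{finite,field}) mat}"
proof (rule equalityI; rule subsetI)
  fix r :: "'a mat" assume "r \<in> {r \<in> UR 4 {1,2,4}. mat_mult 4 (emat 4 2 4) r \<in> UTpi 4 pi4}"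
  then have r: "r \<in> UR 4 {1,2,4}" and P: "mat_mult 4 (emat 4 2 4) r \<in> UTpi 4 pi4" by auto
  have r43: "r 4 3 = 0" using UT_nz[OF UR_UT[OF r], of 4 3] by (cases "r 4 3 = 0") auto
  have "mat_mult 4 (emat 4 2 4) r 1 3 = r 1 3" by (subst emat_mult) auto
  moreover have "\<not> (1 \<noteq> (3::nat) \<and> mat_mult 4 (emat 4 2 4) r 1 3 \<noteq> 0)"
    using P pi4_facts(3) unfolding UTpi_iff by blast
  ultimately have r13: "r 1 3 = 0" by simp
  have "mat_mult 4 (emat 4 2 4) r 2 3 = r 2 3" using r43 by (subst emat_mult) auto
  moreover have "\<not> (2 \<noteq> (3::nat) \<and> mat_mult 4 (emat 4 2 4) r 2 3 \<noteq> 0)"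
    using P pi4_facts(2) unfolding UTpi_iff by blast
  ultimately have r23: "r 2 3 = 0" by simp
  have "r = mat_one 4"
    by (rule UR_is_one[OF r]) (use r13 r23 in \<open>auto simp: atLeastAtMost_1_4\<close>)
  then show "r \<in> {mat_one 4}" by simp
next
  fix r :: "'a mat" assume "r \<in> {mat_one 4}"
  then show "r \<in> {r \<in> UR 4 {1,2,4}. mat_mult 4 (emat 4 2 4) r \<in> UTpi 4 pi4}"
    using mat_one_UR emat24_UTpi[where 'a='a] mat_one_right[OF eU[where 'a='a]] by auto
qed

lemma card_UR3: "card (UR 4 {3} :: ('a::{finite,field}) mat set) = card (UNIV :: 'a set)"
proof -
  define mk where "mk = (\<lambda>s::'a. (\<lambda>(i::nat) (j::nat). if i = j \<and> 1 \<le> i \<and> i \<le> 4 then 1 else if i = 3 \<and> j = 4 then s else (0::'a)))"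
  have "UR 4 {3} = range mk"
  proof (rule equalityI; rule subsetI)
    fix r :: "'a mat" assume r: "r \<in> UR 4 {3}"
    have "r = mk (r 3 4)"
    proof (rule ext, rule ext)
      fix i j show "r i j = mk (r 3 4) i j"
      proof (cases "i = j")
        case True then show ?thesis using UT_D(1)[OF UR_UT[OF r], of i] by (simp add: mk_def)
      next
        case False
        show ?thesis
        proof (cases "r i j = 0")
          case True then show ?thesis using False by (auto simp: mk_def)
        next
          case nz: False
          from UR_nz[OF r False nz] have "i = 3 \<and> j = 4" by auto
          then show ?thesis by (simp add: mk_def)
        qed
      qed
    qed
    then show "r \<in> range mk" by blast
  next
    fix r assume "r \<in> range mk"
    then obtain s where "r = mk s" by blast
    then show "r \<in> UR 4 {3}" by (auto simp: UR_def UT_iff mk_def split: if_splits)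
  qed
  moreover have "inj mk"
  proof (rule injI)
    fix s t assume "mk s = mk t"
    then have "mk s 3 4 = mk t 3 4" by simp
    then show "s = t" by (simp add: mk_def)
  qed
  ultimately show ?thesis by (simp add: card_image)
qed

lemma card_UR124: "card (UR 4 {1,2,4} :: ('a::{finite,field}) mat set) = card (UNIV :: 'a set) * card (UNIV :: 'a set)"
proof -
  define mk where "mk = (\<lambda>(u::'a,v::'a). (\<lambda>(i::nat) (j::nat). if i = j \<and> 1 \<le> i \<and> i \<le> 4 then 1 else if i = 1 \<and> j = 3 then u else if i = 2 \<and> j = 3 then v else (0::'a)))"
  have "UR 4 {1,2,4} = range mk"
  proof (rule equalityI; rule subsetI)
    fix r :: "'a mat" assume r: "r \<in> UR 4 {1,2,4}"
    have "r = mk (r 1 3, r 2 3)"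
    proof (rule ext, rule ext)
      fix i j show "r i j = mk (r 1 3, r 2 3) i j"
      proof (cases "i = j")
        case True then show ?thesis using UT_D(1)[OF UR_UT[OF r], of i] by (simp add: mk_def)
      next
        case False
        show ?thesis
        proof (cases "r i j = 0")
          case True then show ?thesis using False by (auto simp: mk_def)
        next
          case nz: False
          from UR_nz[OF r False nz] have "(i = 1 \<or> i = 2) \<and> j = 3" by auto
          then show ?thesis by (auto simp: mk_def)
        qed
      qed
    qed
    then show "r \<in> range mk" by blast
  next
    fix r assume "r \<in> range mk"
    then obtain u v where "r = mk (u,v)" by auto
    then show "r \<in> UR 4 {1,2,4}" by (auto simp: UR_def UT_iff mk_def split: if_splits)
  qed
  moreover have "inj mk"
  proof (rule injI)
    fix p q assume e: "mk p = mk q"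
    obtain u v where p: "p = (u,v)" by fastforce
    obtain u' v' where q: "q = (u',v')" by fastforce
    have "mk p 1 3 = mk q 1 3" "mk p 2 3 = mk q 2 3" using e by simp_all
    then show "p = q" using p q by (simp add: mk_def)
  qed
  ultimately have "card (UR 4 {1,2,4} :: 'a mat set) = card (UNIV :: ('a \<times> 'a) set)" by (simp add: card_image)
  also have "\<dots> = card (UNIV :: 'a set) * card (UNIV :: 'a set)"
    using card_cartesian_product[of "UNIV :: 'a set" "UNIV :: 'a set"] by simp
  finally show ?thesis .
qed

lemma subsets1: "{I. I \<subseteq> {1..4::nat} \<and> card I = 1} = (\<lambda>x. {x}) ` {1..4}"
  by (auto simp: card_1_singleton_iff)

lemma subsets3: "{I. I \<subseteq> {1..4::nat} \<and> card I = 3} = (\<lambda>x. {1..4} - {x}) ` {1..4}"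
proof (rule equalityI; rule subsetI)
  fix I assume "I \<in> {I. I \<subseteq> {1..4::nat} \<and> card I = 3}"
  then have I: "I \<subseteq> {1..4}" "card I = 3" by auto
  have "card ({1..4::nat} - I) = 1" using I by (simp add: card_Diff_subset finite_subset)
  then obtain x where x: "{1..4::nat} - I = {x}" by (auto simp: card_1_singleton_iff)
  then have "I = {1..4} - {x}" "x \<in> {1..4}" using I(1) by auto
  then show "I \<in> (\<lambda>x. {1..4} - {x}) ` {1..4}" by blast
next
  fix I assume "I \<in> (\<lambda>x. {1..4::nat} - {x}) ` {1..4}"
  then obtain x where "x \<in> {1..4::nat}" "I = {1..4} - {x}" by blast
  then show "I \<in> {I. I \<subseteq> {1..4::nat} \<and> card I = 3}" by auto
qed

lemma sum4: "(\<Sum>x\<in>{1..4::nat}. f x) = f 1 + f 2 + f 3 + f 4"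
  by (simp add: atLeastAtMost_1_4 add.assoc)

lemma diff4: "{1..4::nat} - {1} = {2,3,4}" "{1..4::nat} - {2} = {1,3,4}"
  "{1..4::nat} - {3} = {1,2,4}" "{1..4::nat} - {4} = {1,2,3}"
  by auto

lemma LHS:
  "cf_comult (single 4 pi4 :: nat \<Rightarrow> ('a::{finite,field}) mat \<Rightarrow> complex) 1 3 (mat_one 1, emat 3 2 3)
   = cst 4 pi4 TYPE('a) / of_nat (card (UNIV :: 'a set))"
proof -
  have gU: "(mat_one 1 :: 'a mat) \<in> UT 1" by (rule mat_one_UT)
  have hU: "(emat 3 2 3 :: 'a mat) \<in> UT 3" by (rule emat_UT) auto
  let ?F = "\<lambda>I. (1 / of_nat (card (UR 4 I :: 'a mat set))) * SR I (embed I 4 (mat_one 1) (emat 3 2 3 :: 'a mat))"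
  have "cf_comult (single 4 pi4 :: nat \<Rightarrow> 'a mat \<Rightarrow> complex) 1 3 (mat_one 1, emat 3 2 3)
      = (\<Sum>I\<in>{I. I \<subseteq> {1..4} \<and> card I = 1}. ?F I)"
    using gU hU by (simp add: cf_comult_def SR_def single_def)
  also have "\<dots> = (\<Sum>x\<in>{1..4}. ?F {x})"
    unfolding subsets1 by (subst sum.reindex) (auto simp: inj_on_def)
  also have "\<dots> = ?F {1} + ?F {2} + ?F {3} + ?F {4}" by (rule sum4)
  also have "\<dots> = cst 4 pi4 TYPE('a) / of_nat (card (UNIV :: 'a set))"
  proof -
    have e1: "SR {1} (embed {1} 4 (mat_one 1) (emat 3 2 3 :: 'a mat)) = 0"
      by (simp only: embed_LHS, rule SR_zero) (simp_all add: pi4_facts)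
    have e2: "SR {2} (embed {2} 4 (mat_one 1) (emat 3 2 3 :: 'a mat)) = 0"
      by (simp only: embed_LHS, rule SR_zero) (simp_all add: pi4_facts)
    have e3: "SR {3} (embed {3} 4 (mat_one 1) (emat 3 2 3 :: 'a mat)) = cst 4 pi4 TYPE('a)"
      by (simp only: embed_LHS, rule SR_one, rule one_3)
    have e4: "SR {4} (embed {4} 4 (mat_one 1) (emat 3 2 3 :: 'a mat)) = 0"
      by (simp only: embed_LHS, rule SR_zero) (simp_all add: pi4_facts)
    show ?thesis by (simp only: e1 e2 e3 e4 card_UR3) simp
  qed
  finally show ?thesis .
qed

lemma RHS:
  "cf_comult (single 4 pi4 :: nat \<Rightarrow> ('a::{finite,field}) mat \<Rightarrow> complex) 3 1 (emat 3 2 3, mat_one 1)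
   = cst 4 pi4 TYPE('a) / of_nat (card (UNIV :: 'a set) * card (UNIV :: 'a set))"
proof -
  have gU: "(mat_one 1 :: 'a mat) \<in> UT 1" by (rule mat_one_UT)
  have hU: "(emat 3 2 3 :: 'a mat) \<in> UT 3" by (rule emat_UT) auto
  let ?F = "\<lambda>I. (1 / of_nat (card (UR 4 I :: 'a mat set))) * SR I (embed I 4 (emat 3 2 3 :: 'a mat) (mat_one 1))"
  have "cf_comult (single 4 pi4 :: nat \<Rightarrow> 'a mat \<Rightarrow> complex) 3 1 (emat 3 2 3, mat_one 1)
      = (\<Sum>I\<in>{I. I \<subseteq> {1..4} \<and> card I = 3}. ?F I)"
    using gU hU by (simp add: cf_comult_def SR_def single_def)
  also have "\<dots> = (\<Sum>x\<in>{1..4}. ?F ({1..4} - {x}))"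
    unfolding subsets3 by (subst sum.reindex) (auto simp: inj_on_def)
  also have "\<dots> = ?F ({1..4} - {1}) + ?F ({1..4} - {2}) + ?F ({1..4} - {3}) + ?F ({1..4} - {4})" by (rule sum4)
  also have "\<dots> = ?F {2,3,4} + ?F {1,3,4} + ?F {1,2,4} + ?F {1,2,3}" by (simp only: diff4)
  also have "\<dots> = cst 4 pi4 TYPE('a) / of_nat (card (UNIV :: 'a set) * card (UNIV :: 'a set))"
  proof -
    have e1: "SR {2,3,4} (embed {2,3,4} 4 (emat 3 2 3 :: 'a mat) (mat_one 1)) = 0"
      by (simp only: embed_RHS, rule SR_zero) (simp_all add: pi4_facts)
    have e2: "SR {1,3,4} (embed {1,3,4} 4 (emat 3 2 3 :: 'a mat) (mat_one 1)) = 0"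
      by (simp only: embed_RHS, rule SR_zero) (simp_all add: pi4_facts)
    have e3: "SR {1,2,4} (embed {1,2,4} 4 (emat 3 2 3 :: 'a mat) (mat_one 1)) = cst 4 pi4 TYPE('a)"
      by (simp only: embed_RHS, rule SR_one, rule one_124)
    have e4: "SR {1,2,3} (embed {1,2,3} 4 (emat 3 2 3 :: 'a mat) (mat_one 1)) = 0"
      by (simp only: embed_RHS, rule SR_zero) (simp_all add: pi4_facts)
    show ?thesis by (simp only: e1 e2 e3 e4 card_UR124) simp
  qed
  finally show ?thesis .
qed

lemma noncocomm_witness:
  "cf_comult (single 4 pi4 :: nat \<Rightarrow> ('a::{finite,field}) mat \<Rightarrow> complex)
   \<noteq> (\<lambda>a b p. cf_comult (single 4 pi4 :: nat \<Rightarrow> 'a mat \<Rightarrow> complex) b a (snd p, fst p))"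
proof
  assume eq: "cf_comult (single 4 pi4 :: nat \<Rightarrow> 'a mat \<Rightarrow> complex)
   = (\<lambda>a b p. cf_comult (single 4 pi4 :: nat \<Rightarrow> 'a mat \<Rightarrow> complex) b a (snd p, fst p))"
  have "cf_comult (single 4 pi4 :: nat \<Rightarrow> 'a mat \<Rightarrow> complex) 1 3 (mat_one 1, emat 3 2 3)
      = cf_comult (single 4 pi4 :: nat \<Rightarrow> 'a mat \<Rightarrow> complex) 3 1 (emat 3 2 3, mat_one 1)"
    using fun_cong[OF fun_cong[OF fun_cong[OF eq, of 1], of 3], of "(mat_one 1, emat 3 2 3)"] by simp
  then have e: "cst 4 pi4 TYPE('a) / of_nat (card (UNIV :: 'a set)) = cst 4 pi4 TYPE('a) / of_nat (card (UNIV :: 'a set) * card (UNIV :: 'a set))"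
    by (simp only: LHS RHS)
  have "card {0::'a, 1} \<le> card (UNIV :: 'a set)" by (rule card_mono) auto
  then have q2: "card (UNIV :: 'a set) \<ge> 2" by simp
  have c: "cst 4 pi4 TYPE('a) \<noteq> 0" by (rule cst_nz)
  define q where "q = (of_nat (card (UNIV :: 'a set)) :: complex)"
  have qnz: "q \<noteq> 0" "q \<noteq> 1" using q2 by (auto simp: q_def)
  from e have "cst 4 pi4 TYPE('a) / q = cst 4 pi4 TYPE('a) / (q * q)" by (simp add: q_def)
  then have "q * q = q" using c qnz by (simp add: field_simps)
  then show False using qnz by simp
qed

theorem theorem7p7:
  shows "noncommutative_on (cfUT :: (nat \<Rightarrow> ('a::{finite,field}) mat \<Rightarrow> complex) set) \<and>
         noncocommutative_on (cfUT :: (nat \<Rightarrow> 'a mat \<Rightarrow> complex) set) \<and>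
         noncommutative_on (scfUT :: (nat \<Rightarrow> 'a mat \<Rightarrow> complex) set) \<and>
         noncocommutative_on (scfUT :: (nat \<Rightarrow> 'a mat \<Rightarrow> complex) set)"
proof -
  have X: "(single 1 (pid 1) :: nat \<Rightarrow> 'a mat \<Rightarrow> complex) \<in> scfUT" by (rule single_scfUT, rule nuio_Id)
  have Y: "(single 2 (pid 2) :: nat \<Rightarrow> 'a mat \<Rightarrow> complex) \<in> scfUT" by (rule single_scfUT, rule nuio_Id)
  have Z: "(single 4 pi4 :: nat \<Rightarrow> 'a mat \<Rightarrow> complex) \<in> scfUT" by (rule single_scfUT, rule nuio_pi4)
  have sub: "(scfUT :: (nat \<Rightarrow> 'a mat \<Rightarrow> complex) set) \<subseteq> cfUT" by (auto simp: scfUT_def)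
  have nc: "noncommutative_on (scfUT :: (nat \<Rightarrow> 'a mat \<Rightarrow> complex) set)"
    unfolding noncommutative_on_def using X Y noncomm_witness by blast
  have ncc: "noncocommutative_on (scfUT :: (nat \<Rightarrow> 'a mat \<Rightarrow> complex) set)"
    unfolding noncocommutative_on_def using Z noncocomm_witness by blast
  have nc': "noncommutative_on (cfUT :: (nat \<Rightarrow> 'a mat \<Rightarrow> complex) set)"
    unfolding noncommutative_on_def using X Y sub noncomm_witness by blast
  have ncc': "noncocommutative_on (cfUT :: (nat \<Rightarrow> 'a mat \<Rightarrow> complex) set)"
    unfolding noncocommutative_on_def using Z sub noncocomm_witness by blast
  show ?thesis using nc ncc nc' ncc' by blast
qed

end
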